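(* Let $C$ be a complex scheme. If $C$ has odd type, then $$\Delta=-4\big(l+2(\Pi^--\Pi^+)+(\Lambda^--\Lambda^+)\big).$$ If $C$ has even type, then $$\Delta=-4\big(l+2(\Pi^--\Pi^+)\big).$$
   Context: A complex scheme $C$ in $\mathbb{R}P^2$ is a finite collection of disjoint smooth simple closed curves, up to isotopy, at most one of which is one-sided. The two-sided components are ovals, and $C$ carries a semi-orientation (orientations of all components up to simultaneous reversal). $C$ has odd type if it has a one-sided component $J$ and even type otherwise; in the even case an auxiliary oriented one-sided curve $J$ disjoint from the ovals is fixed. Numerical characteristics: - $l$ is the number of ovals. - Regions are the components of $\mathbb{R}P^2\setminus(C\cup J)$, and the outer region $R_1$ is the one whose closure meets $J$. The parity $\mathrm{par}$ of a region or oval is the parity of the number of ovals crossed to reach $R_1$. - For an oval $o$ bounding a disk $D_o$ and $x\in\mathrm{int}D_o$, one has $[o]=\pm2[J]$ in $H_1(\mathbb{R}P^2\setminus\{x\})$; $o$ is negative if $[o]=2[J]$, positive otherwise, and $\epsilon(o)=\pm1$ accordingly. $\Lambda^+$ and $\Lambda^-$ are the numbers of positive and negative ovals. - Two ovals form an injective pair if they bound an annulus in $\mathbb{R}P^2$. The pair is positive if their orientations are the boundary orientation induced by an orientation of that annulus, and negative otherwise. $\Pi^\pm$ is the number of positive/negative injective pairs. $\Gamma=\Gamma(C)$ is the weighted tree with vertices $R$ (weight $2\chi(R)$) for each region, $o$ (weight $0$) for each oval, and $u_1,u_2,u_3$ (weights $1,2,2$). Its edges are $Ro$ for $o\subset\partial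 R$, and $u_1u_2$, $u_1u_3$, $u_1R_1$. $A_\Gamma$ is the matrix with the weights on the diagonal and $1$ for adjacent vertices, $0$ otherwise. $\vec s$ is the vector indexed by vertices with the following entries: - $\vec s_{u_2}=1$ if $C$ has odd type and $0$ otherwise; - $\vec s_o=(-1)^{\mathrm{par}(o)+1}\epsilon(o)$ for each oval $o$; - $0$ at all other vertices. Finally $\Delta=2\vec sA_\Gamma^{-1}\vec s^{\,t}$. *)

theory Defs
  imports Complex_Main
begin

text \<open>
  Combinatorial encoding of a complex scheme C in RP^2.
  Ovals are the elements of a finite set Ovs.
  encl a b  : oval a lies inside the disk D_b bounded by oval b (a <> b).
  ccw a     : the orientation of oval a agrees with the boundary orientation
              of D_a, where all disks D_a are oriented by a fixed orientation
              of the open disk RP^2 - J (which contains every oval).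
  jsgn      : the sign epsilon taken by ovals with ccw = True (it encodes the
              orientation of J relative to the chosen orientation of RP^2 - J).
  oddtype       : C has odd type (J is a component of C); otherwise even type.
\<close>

definition nest_forest :: "'a set \<Rightarrow> ('a \<Rightarrow> 'a \<Rightarrow> bool) \<Rightarrow> bool" where
  "nest_forest Ovs encl \<longleftrightarrow> finite Ovs
     \<and> (\<forall>a b. encl a b \<longrightarrow> a \<in> Ovs \<and> b \<in> Ovs)
     \<and> (\<forall>a. \<not> encl a a)
     \<and> (\<forall>a b c. encl a b \<and> encl b c \<longrightarrow> encl a c)
     \<and> (\<forall>a b c. encl a b \<and> encl a c \<longrightarrow> b = c \<or> encl b c \<or> encl c b)"

definition is_top :: "'a set \<Rightarrow> ('a \<Rightarrow> 'a \<Rightarrow> bool) \<Rightarrow> 'a \<Rightarrow> bool" where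
  "is_top Ovs encl a \<longleftrightarrow> a \<in> Ovs \<and> \<not> (\<exists>b\<in>Ovs. encl a b)"

definition is_parent :: "'a set \<Rightarrow> ('a \<Rightarrow> 'a \<Rightarrow> bool) \<Rightarrow> 'a \<Rightarrow> 'a \<Rightarrow> bool" where
  "is_parent Ovs encl a b \<longleftrightarrow> a \<in> Ovs \<and> b \<in> Ovs \<and> encl a b \<and> \<not> (\<exists>c\<in>Ovs. encl a c \<and> encl c b)"

definition depth :: "'a set \<Rightarrow> ('a \<Rightarrow> 'a \<Rightarrow> bool) \<Rightarrow> 'a \<Rightarrow> nat" where
  "depth Ovs encl a = card {b\<in>Ovs. encl a b}"

text \<open>Vertices of Gamma: the outer region R_1, the region inside each oval
  (bounded by that oval and its immediate children), the ovals, u1, u2, u3.\<close>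
datatype 'a gvert = Outer | Inner 'a | Ov 'a | U1 | U2 | U3

definition gverts :: "'a set \<Rightarrow> 'a gvert set" where
  "gverts Ovs = {Outer, U1, U2, U3} \<union> Inner ` Ovs \<union> Ov ` Ovs"

text \<open>Euler characteristic of regions: the region inside oval b is a disk
  minus the disks of its immediate children; the outer region is
  RP^2 - J (an open disk) minus the disks of the outermost ovals.\<close>
definition region_chi :: "'a set \<Rightarrow> ('a \<Rightarrow> 'a \<Rightarrow> bool) \<Rightarrow> 'a gvert \<Rightarrow> int" where
  "region_chi Ovs encl v = (case v of
      Outer \<Rightarrow> 1 - int (card {a. is_top Ovs encl a})
    | Inner b \<Rightarrow> 1 - int (card {a. is_parent Ovs encl a b})
    | _ \<Rightarrow> 0)"

definition gweight :: "'a set \<Rightarrow> ('a \<Rightarrow> 'a \<Rightarrow> bool) \<Rightarrow> 'a gvert \<Rightarrow> int" where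
  "gweight Ovs encl v = (case v of
      Outer \<Rightarrow> 2 * region_chi Ovs encl v
    | Inner b \<Rightarrow> 2 * region_chi Ovs encl v
    | Ov a \<Rightarrow> 0
    | U1 \<Rightarrow> 1 | U2 \<Rightarrow> 2 | U3 \<Rightarrow> 2)"

definition gedge :: "'a set \<Rightarrow> ('a \<Rightarrow> 'a \<Rightarrow> bool) \<Rightarrow> 'a gvert \<Rightarrow> 'a gvert \<Rightarrow> bool" where
  "gedge Ovs encl v w \<longleftrightarrow>
      (\<exists>a. v = Outer \<and> w = Ov a \<and> is_top Ovs encl a)
    \<or> (\<exists>b. b \<in> Ovs \<and> v = Inner b \<and> w = Ov b)
    \<or> (\<exists>a b. v = Inner b \<and> w = Ov a \<and> is_parent Ovs encl a b)
    \<or> (v = U1 \<and> w = U2) \<or> (v = U1 \<and> w = U3) \<or> (v = U1 \<and> w = Outer)"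

definition gadj :: "'a set \<Rightarrow> ('a \<Rightarrow> 'a \<Rightarrow> bool) \<Rightarrow> 'a gvert \<Rightarrow> 'a gvert \<Rightarrow> bool" where
  "gadj Ovs encl v w \<longleftrightarrow> gedge Ovs encl v w \<or> gedge Ovs encl w v"

definition Amat :: "'a set \<Rightarrow> ('a \<Rightarrow> 'a \<Rightarrow> bool) \<Rightarrow> 'a gvert \<Rightarrow> 'a gvert \<Rightarrow> real" where
  "Amat Ovs encl v w = (if v = w then real_of_int (gweight Ovs encl v)
                      else if gadj Ovs encl v w then 1 else 0)"

definition eps :: "('a \<Rightarrow> bool) \<Rightarrow> int \<Rightarrow> 'a \<Rightarrow> int" where
  "eps ccw jsgn a = (if ccw a then jsgn else - jsgn)"

definition svec :: "'a set \<Rightarrow> ('a \<Rightarrow> 'a \<Rightarrow> bool) \<Rightarrow> ('a \<Rightarrow> bool) \<Rightarrow> int \<Rightarrow> bool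
                    \<Rightarrow> 'a gvert \<Rightarrow> real" where
  "svec Ovs encl ccw jsgn oddtype v = (case v of
      U2 \<Rightarrow> (if oddtype then 1 else 0)
    | Ov a \<Rightarrow> (if a \<in> Ovs then (-1) ^ (depth Ovs encl a + 1) * real_of_int (eps ccw jsgn a) else 0)
    | _ \<Rightarrow> 0)"

definition solves :: "'a set \<Rightarrow> ('a \<Rightarrow> 'a \<Rightarrow> bool) \<Rightarrow> ('a \<Rightarrow> bool) \<Rightarrow> int \<Rightarrow> bool
                    \<Rightarrow> ('a gvert \<Rightarrow> real) \<Rightarrow> bool" where
  "solves Ovs encl ccw jsgn oddtype x \<longleftrightarrow>
     (\<forall>v. v \<notin> gverts Ovs \<longrightarrow> x v = 0) \<and>
     (\<forall>v\<in>gverts Ovs. (\<Sum>w\<in>gverts Ovs. Amat Ovs encl v w * x w) = svec Ovs encl ccw jsgn oddtype v)"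

text \<open>Delta = 2 s A^{-1} s^t (A is symmetric, A^{-1} s^t is the unique solution).\<close>
definition Delta :: "'a set \<Rightarrow> ('a \<Rightarrow> 'a \<Rightarrow> bool) \<Rightarrow> ('a \<Rightarrow> bool) \<Rightarrow> int \<Rightarrow> bool \<Rightarrow> real" where
  "Delta Ovs encl ccw jsgn oddtype =
     2 * (\<Sum>v\<in>gverts Ovs. svec Ovs encl ccw jsgn oddtype v * (THE x. solves Ovs encl ccw jsgn oddtype x) v)"

text \<open>Injective pairs: (a, b) with a inside D_b. The pair is positive iff its
  orientations are the boundary orientation of the annulus D_b - int D_a, i.e.
  (as the annulus inherits the orientation of RP^2 - J) iff exactly one of a, b
  is oriented as the boundary of its disk.\<close>
definition Pi_plus :: "'a set \<Rightarrow> ('a \<Rightarrow> 'a \<Rightarrow> bool) \<Rightarrow> ('a \<Rightarrow> bool) \<Rightarrow> nat" where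
  "Pi_plus Ovs encl ccw = card {(a, b). a \<in> Ovs \<and> b \<in> Ovs \<and> encl a b \<and> ccw a \<noteq> ccw b}"

definition Pi_minus :: "'a set \<Rightarrow> ('a \<Rightarrow> 'a \<Rightarrow> bool) \<Rightarrow> ('a \<Rightarrow> bool) \<Rightarrow> nat" where
  "Pi_minus Ovs encl ccw = card {(a, b). a \<in> Ovs \<and> b \<in> Ovs \<and> encl a b \<and> ccw a = ccw b}"

definition Lambda_plus :: "'a set \<Rightarrow> ('a \<Rightarrow> bool) \<Rightarrow> int \<Rightarrow> nat" where
  "Lambda_plus Ovs ccw jsgn = card {a\<in>Ovs. eps ccw jsgn a = 1}"

definition Lambda_minus :: "'a set \<Rightarrow> ('a \<Rightarrow> bool) \<Rightarrow> int \<Rightarrow> nat" where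
  "Lambda_minus Ovs ccw jsgn = card {a\<in>Ovs. eps ccw jsgn a = -1}"

end

theory Submission
  imports Defs
begin


locale nf =
  fixes Ovs :: "'a set" and encl :: "'a \<Rightarrow> 'a \<Rightarrow> bool"
  assumes nf: "nest_forest Ovs encl"
begin

lemma fin: "finite Ovs" using nf unfolding nest_forest_def by blast
lemma encl_in: "encl a b \<Longrightarrow> a \<in> Ovs \<and> b \<in> Ovs" using nf unfolding nest_forest_def by blast
lemma irr: "\<not> encl a a" using nf unfolding nest_forest_def by blast
lemma tr: "encl a b \<Longrightarrow> encl b c \<Longrightarrow> encl a c" using nf unfolding nest_forest_def by blast
lemma lin: "encl a b \<Longrightarrow> encl a c \<Longrightarrow> b = c \<or> encl b c \<or> encl c b" using nf unfolding nest_forest_def by blast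

abbreviation D where "D a \<equiv> depth Ovs encl a"

lemma depth_less: assumes "encl a b" shows "D b < D a"
proof -
  have "{c\<in>Ovs. encl b c} \<subset> {c\<in>Ovs. encl a c}"
    using assms tr irr encl_in by blast
  then show ?thesis unfolding depth_def using fin by (simp add: psubset_card_mono)
qed

lemma top_or_parent: assumes "a \<in> Ovs" shows "is_top Ovs encl a \<or> (\<exists>b. is_parent Ovs encl a b)"
proof (cases "is_top Ovs encl a")
  case False
  define S where "S = {b\<in>Ovs. encl a b}"
  have S: "finite S" "S \<noteq> {}" using False assms fin unfolding S_def is_top_def by auto
  have "Max (D ` S) \<in> D ` S" using S by (intro Max_in) auto
  then obtain b where b: "b \<in> S" "D b = Max (D ` S)" by (metis imageE)
  have "is_parent Ovs encl a b"
    unfolding is_parent_def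
  proof (intro conjI)
    show "a \<in> Ovs" "b \<in> Ovs" "encl a b" using b assms unfolding S_def by auto
    show "\<not> (\<exists>c\<in>Ovs. encl a c \<and> encl c b)"
    proof
      assume "\<exists>c\<in>Ovs. encl a c \<and> encl c b"
      then obtain c where c: "c \<in> S" "encl c b" unfolding S_def by auto
      have "D c \<le> D b" using b c S by simp
      moreover have "D b < D c" using depth_less[OF c(2)] .
      ultimately show False by simp
    qed
  qed
  then show ?thesis by blast
qed simp

lemma parent_unique: "is_parent Ovs encl a b \<Longrightarrow> is_parent Ovs encl a c \<Longrightarrow> b = c"
  unfolding is_parent_def using lin by blast

lemma top_not_parent: "is_top Ovs encl a \<Longrightarrow> \<not> is_parent Ovs encl a b"
  unfolding is_parent_def is_top_def by blast

lemma anc_top: "is_top Ovs encl a \<Longrightarrow> {c\<in>Ovs. encl a c} = {}"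
  unfolding is_top_def by blast

lemma anc_parent: assumes "is_parent Ovs encl a b"
  shows "{c\<in>Ovs. encl a c} = insert b {c\<in>Ovs. encl b c}" "b \<notin> {c\<in>Ovs. encl b c}"
  using assms lin tr irr unfolding is_parent_def by blast+

lemma depth_top: "is_top Ovs encl a \<Longrightarrow> D a = 0"
  unfolding depth_def using anc_top[of a] by (metis card.empty)

lemma depth_parent: "is_parent Ovs encl a b \<Longrightarrow> D a = Suc (D b)"
  unfolding depth_def using anc_parent fin by simp

lemma desc_ex: assumes "encl d b"
  shows "\<exists>a. is_parent Ovs encl a b \<and> (d = a \<or> encl d a)"
proof -
  define S where "S = {c\<in>Ovs. (d = c \<or> encl d c) \<and> encl c b}"
  have S: "finite S" "S \<noteq> {}" using assms fin encl_in unfolding S_def by auto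
  have "Min (D ` S) \<in> D ` S" using S by (intro Min_in) auto
  then obtain c where c: "c \<in> S" "D c = Min (D ` S)" by (metis imageE)
  have "is_parent Ovs encl c b \<and> (d = c \<or> encl d c)"
    unfolding is_parent_def
  proof (intro conjI)
    show "c \<in> Ovs" "b \<in> Ovs" "encl c b" "d = c \<or> encl d c" using c encl_in unfolding S_def by auto
    show "\<not> (\<exists>e\<in>Ovs. encl c e \<and> encl e b)"
    proof
      assume "\<exists>e\<in>Ovs. encl c e \<and> encl e b"
      then obtain e where e: "e \<in> Ovs" "encl c e" "encl e b" by auto
      have "e \<in> S" using e c tr unfolding S_def by blast
      then have "D c \<le> D e" using c S by simp
      moreover have "D e < D c" using depth_less[OF e(2)] .
      ultimately show False by simp
    qed
  qed
  then show ?thesis by blast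
qed

lemma desc_uniq: "is_parent Ovs encl a1 b \<Longrightarrow> (d = a1 \<or> encl d a1) \<Longrightarrow>
   is_parent Ovs encl a2 b \<Longrightarrow> (d = a2 \<or> encl d a2) \<Longrightarrow> a1 = a2"
  unfolding is_parent_def using lin encl_in by metis

lemma top_ex: assumes "d \<in> Ovs"
  shows "\<exists>a. is_top Ovs encl a \<and> (d = a \<or> encl d a)"
proof -
  define S where "S = {c\<in>Ovs. (d = c \<or> encl d c)}"
  have S: "finite S" "S \<noteq> {}" using assms fin encl_in unfolding S_def by auto
  have "Min (D ` S) \<in> D ` S" using S by (intro Min_in) auto
  then obtain c where c: "c \<in> S" "D c = Min (D ` S)" by (metis imageE)
  have "is_top Ovs encl c \<and> (d = c \<or> encl d c)"
    unfolding is_top_def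
  proof (intro conjI)
    show "c \<in> Ovs" "d = c \<or> encl d c" using c encl_in unfolding S_def by auto
    show "\<not> (\<exists>e\<in>Ovs. encl c e)"
    proof
      assume "\<exists>e\<in>Ovs. encl c e"
      then obtain e where e: "e \<in> Ovs" "encl c e" by auto
      have "e \<in> S" using e c tr unfolding S_def by blast
      then have "D c \<le> D e" using c S by simp
      moreover have "D e < D c" using depth_less[OF e(2)] .
      ultimately show False by simp
    qed
  qed
  then show ?thesis by blast
qed

lemma top_uniq: "is_top Ovs encl a1 \<Longrightarrow> (d = a1 \<or> encl d a1) \<Longrightarrow>
   is_top Ovs encl a2 \<Longrightarrow> (d = a2 \<or> encl d a2) \<Longrightarrow> a1 = a2"
  unfolding is_top_def using lin encl_in by metis

end



context nf begin

definition ch where "ch b = {a. is_parent Ovs encl a b}"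
definition tops where "tops = {a. is_top Ovs encl a}"
definition rowsum where "rowsum x v = (\<Sum>w\<in>gverts Ovs. Amat Ovs encl v w * x w)"

lemma in_ch: "a \<in> ch b \<longleftrightarrow> is_parent Ovs encl a b" unfolding ch_def by simp
lemma in_tops: "a \<in> tops \<longleftrightarrow> is_top Ovs encl a" unfolding tops_def by simp
lemma ch_sub: "ch b \<subseteq> Ovs" unfolding ch_def is_parent_def by auto
lemma tops_sub: "tops \<subseteq> Ovs" unfolding tops_def is_top_def by auto
lemma fin_ch: "finite (ch b)" using ch_sub fin finite_subset by blast
lemma fin_tops: "finite tops" using tops_sub fin finite_subset by blast
lemma b_notin_ch: "b \<notin> ch b" unfolding ch_def is_parent_def using irr by blast

lemma sum_gverts: "(\<Sum>w\<in>gverts Ovs. f w) = f Outer + f U1 + f U2 + f U3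
   + (\<Sum>b\<in>Ovs. f (Inner b)) + (\<Sum>a\<in>Ovs. f (Ov a))"
proof -
  have g: "gverts Ovs = ({Outer, U1, U2, U3} \<union> Inner ` Ovs) \<union> Ov ` Ovs" unfolding gverts_def by auto
  have "(\<Sum>w\<in>gverts Ovs. f w) = (\<Sum>w\<in>{Outer, U1, U2, U3} \<union> Inner ` Ovs. f w) + (\<Sum>w\<in>Ov ` Ovs. f w)"
    unfolding g by (rule sum.union_disjoint) (use fin in auto)
  also have "(\<Sum>w\<in>{Outer, U1, U2, U3} \<union> Inner ` Ovs. f w) = (\<Sum>w\<in>{Outer, U1, U2, U3}. f w) + (\<Sum>w\<in>Inner ` Ovs. f w)"
    by (rule sum.union_disjoint) (use fin in auto)
  also have "(\<Sum>w\<in>Inner ` Ovs. f w) = (\<Sum>b\<in>Ovs. f (Inner b))" by (simp add: sum.reindex inj_on_def)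
  also have "(\<Sum>w\<in>Ov ` Ovs. f w) = (\<Sum>b\<in>Ovs. f (Ov b))" by (simp add: sum.reindex inj_on_def)
  finally show ?thesis by (simp add: add.assoc)
qed

lemma sum_if_set: "finite A \<Longrightarrow> T \<subseteq> A \<Longrightarrow> (\<Sum>b\<in>A. if b \<in> T then g b else 0) = (\<Sum>b\<in>T. g b)"
  by (simp add: sum.inter_restrict[symmetric] Int_absorb1)

lemma ifmult: "(if P then 1 else 0) * (y::real) = (if P then y else 0)" by simp
lemma ifmult2: "(if P then c else 0) * (y::real) = (if P then c * y else 0)" by simp

lemma A_OvOv[simp]: "Amat Ovs encl (Ov a) (Ov c) = 0"
  by (simp add: Amat_def gadj_def gedge_def gweight_def)
lemma A_InIn[simp]: "Amat Ovs encl (Inner b) (Inner c) = (if c = b then 2 * (1 - real (card (ch b))) else 0)"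
  by (simp add: Amat_def gadj_def gedge_def gweight_def region_chi_def ch_def)
lemma A_OvIn[simp]: "Amat Ovs encl (Ov a) (Inner b) = (if (b = a \<and> b \<in> Ovs) \<or> is_parent Ovs encl a b then 1 else 0)"
  by (auto simp add: Amat_def gadj_def gedge_def)
lemma A_InOv[simp]: "Amat Ovs encl (Inner b) (Ov a) = (if (b = a \<and> b \<in> Ovs) \<or> is_parent Ovs encl a b then 1 else 0)"
  by (auto simp add: Amat_def gadj_def gedge_def)
lemma A_OutOut[simp]: "Amat Ovs encl Outer Outer = 2 * (1 - real (card tops))"
  by (simp add: Amat_def gweight_def region_chi_def tops_def)
lemma A_OutOv[simp]: "Amat Ovs encl Outer (Ov a) = (if is_top Ovs encl a then 1 else 0)"
  by (simp add: Amat_def gadj_def gedge_def)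
lemma A_OvOut[simp]: "Amat Ovs encl (Ov a) Outer = (if is_top Ovs encl a then 1 else 0)"
  by (simp add: Amat_def gadj_def gedge_def)
lemma A_OutIn[simp]: "Amat Ovs encl Outer (Inner b) = 0"
  by (simp add: Amat_def gadj_def gedge_def)
lemma A_InOut[simp]: "Amat Ovs encl (Inner b) Outer = 0"
  by (simp add: Amat_def gadj_def gedge_def)

lemma row_Ov0: assumes "a \<in> Ovs"
  shows "rowsum x (Ov a) = (if is_top Ovs encl a then x Outer else 0)
      + (\<Sum>b\<in>Ovs. if b \<in> insert a {b. is_parent Ovs encl a b} then x (Inner b) else 0)"
  unfolding rowsum_def sum_gverts
  by (auto simp add: Amat_def[of _ _ "Ov a" "U1"] Amat_def[of _ _ "Ov a" "U2"] Amat_def[of _ _ "Ov a" "U3"]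
     gadj_def gedge_def assms ifmult intro!: sum.cong)
lemma row_Ov_top: assumes "is_top Ovs encl a"
  shows "rowsum x (Ov a) = x Outer + x (Inner a)"
proof -
  have a: "a \<in> Ovs" using assms unfolding is_top_def by auto
  have "\<And>b. \<not> is_parent Ovs encl a b" using top_not_parent assms by auto
  then show ?thesis using row_Ov0[OF a] a fin by (simp add: assms)
qed

lemma row_Ov_par: assumes "is_parent Ovs encl a p"
  shows "rowsum x (Ov a) = x (Inner a) + x (Inner p)"
proof -
  have a: "a \<in> Ovs" "p \<in> Ovs" "a \<noteq> p" using assms irr unfolding is_parent_def by auto
  have "insert a {b. is_parent Ovs encl a b} = {a, p}" using parent_unique assms by auto
  moreover have "\<not> is_top Ovs encl a" using assms top_not_parent by blast
  moreover have "(\<Sum>b\<in>Ovs. if b \<in> {a,p} then x (Inner b) else 0) = x (Inner a) + x (Inner p)"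
    using a fin by (subst sum_if_set) auto
  moreover have "\<And>b. is_parent Ovs encl a b \<longleftrightarrow> b = p" using parent_unique assms by auto
  ultimately show ?thesis using row_Ov0[OF a(1)] by simp
qed

lemma row_Inner: assumes "b \<in> Ovs"
  shows "rowsum x (Inner b) = 2 * (1 - real (card (ch b))) * x (Inner b) + x (Ov b) + (\<Sum>a\<in>ch b. x (Ov a))"
proof -
  have "rowsum x (Inner b) = 2 * (1 - real (card (ch b))) * x (Inner b)
      + (\<Sum>a\<in>Ovs. if a \<in> insert b (ch b) then x (Ov a) else 0)"
    unfolding rowsum_def sum_gverts
    by (auto simp add: Amat_def[of _ _ "Inner b" "U1"] Amat_def[of _ _ "Inner b" "U2"] Amat_def[of _ _ "Inner b" "U3"]
     gadj_def gedge_def assms ifmult ifmult2 sum.delta fin in_ch intro!: sum.cong)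
  also have "(\<Sum>a\<in>Ovs. if a \<in> insert b (ch b) then x (Ov a) else 0) = (\<Sum>a\<in>insert b (ch b). x (Ov a))"
    using fin ch_sub assms by (intro sum_if_set) auto
  also have "\<dots> = x (Ov b) + (\<Sum>a\<in>ch b. x (Ov a))" using fin_ch b_notin_ch by simp
  finally show ?thesis by simp
qed

lemma row_Outer:
  shows "rowsum x Outer = 2 * (1 - real (card tops)) * x Outer + x U1 + (\<Sum>a\<in>tops. x (Ov a))"
proof -
  have "rowsum x Outer = 2 * (1 - real (card tops)) * x Outer + x U1
      + (\<Sum>a\<in>Ovs. if a \<in> tops then x (Ov a) else 0)"
    unfolding rowsum_def sum_gverts
    by (auto simp add: Amat_def[of _ _ "Outer" "U1"] Amat_def[of _ _ "Outer" "U2"] Amat_def[of _ _ "Outer" "U3"]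
     gadj_def gedge_def ifmult tops_def intro!: sum.cong)
  also have "(\<Sum>a\<in>Ovs. if a \<in> tops then x (Ov a) else 0) = (\<Sum>a\<in>tops. x (Ov a))"
    using fin tops_sub by (intro sum_if_set) auto
  finally show ?thesis by simp
qed

lemma row_U1: "rowsum x U1 = x U1 + x U2 + x U3 + x Outer"
  unfolding rowsum_def sum_gverts by (simp add: Amat_def gadj_def gedge_def gweight_def)
lemma row_U2: "rowsum x U2 = x U1 + 2 * x U2"
  unfolding rowsum_def sum_gverts by (simp add: Amat_def gadj_def gedge_def gweight_def)
lemma row_U3: "rowsum x U3 = x U1 + 2 * x U3"
  unfolding rowsum_def sum_gverts by (simp add: Amat_def gadj_def gedge_def gweight_def)

end



context nf begin

definition desc where "desc b = {d\<in>Ovs. encl d b}"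

lemma desc_less: assumes "is_parent Ovs encl a b" shows "card (desc a) < card (desc b)"
proof -
  have "desc a \<subset> desc b" using assms tr irr unfolding desc_def is_parent_def by blast
  then show ?thesis using fin unfolding desc_def by (simp add: psubset_card_mono)
qed

lemma Ov_in: "a \<in> Ovs \<Longrightarrow> Ov a \<in> gverts Ovs" and Inner_in: "a \<in> Ovs \<Longrightarrow> Inner a \<in> gverts Ovs"
  and U_in: "Outer \<in> gverts Ovs" "U1 \<in> gverts Ovs" "U2 \<in> gverts Ovs" "U3 \<in> gverts Ovs"
  unfolding gverts_def by auto

lemma hom_zero: assumes h: "\<forall>v\<in>gverts Ovs. rowsum z v = 0" shows "\<forall>v\<in>gverts Ovs. z v = 0"
proof -
  define t where "t = z Outer"
  have inner: "\<forall>a. a \<in> Ovs \<longrightarrow> D a = n \<longrightarrow> z (Inner a) = - ((-1) ^ n) * t" for n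
  proof (induction n rule: less_induct)
    case (less n)
    show ?case
    proof (intro allI impI)
      fix a assume a: "a \<in> Ovs" "D a = n"
      have r: "rowsum z (Ov a) = 0" using h Ov_in[OF a(1)] by blast
      show "z (Inner a) = - ((-1) ^ n) * t"
      proof (cases "is_top Ovs encl a")
        case True
        then show ?thesis using r row_Ov_top[OF True] depth_top[OF True] a t_def by simp
      next
        case False
        then obtain p where p: "is_parent Ovs encl a p" using top_or_parent a by blast
        have pO: "p \<in> Ovs" using p unfolding is_parent_def by auto
        have dp: "n = Suc (D p)" using depth_parent[OF p] a by simp
        have "z (Inner p) = - ((-1) ^ D p) * t" using less.IH[of "D p"] dp pO by simp
        then show ?thesis using r row_Ov_par[OF p] dp by simp
      qed
    qed
  qed
  have ov: "\<forall>b. b \<in> Ovs \<longrightarrow> card (desc b) = n \<longrightarrow> z (Ov b) = 2 * (-1) ^ D b * t" for n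
  proof (induction n rule: less_induct)
    case (less n)
    show ?case
    proof (intro allI impI)
      fix b assume b: "b \<in> Ovs" "card (desc b) = n"
      have r: "rowsum z (Inner b) = 0" using h Inner_in[OF b(1)] by blast
      have zi: "z (Inner b) = - ((-1) ^ D b) * t" using inner b by blast
      have "(\<Sum>a\<in>ch b. z (Ov a)) = (\<Sum>a\<in>ch b. - (2 * (-1) ^ D b * t))"
      proof (rule sum.cong)
        fix a assume "a \<in> ch b"
        then have p: "is_parent Ovs encl a b" by (simp add: in_ch)
        have "z (Ov a) = 2 * (-1) ^ D a * t" using less.IH[of "card (desc a)"] desc_less[OF p] b p
          unfolding is_parent_def by auto
        then show "z (Ov a) = - (2 * (-1) ^ D b * t)" using depth_parent[OF p] by simp
      qed simp
      then have "(\<Sum>a\<in>ch b. z (Ov a)) = - real (card (ch b)) * (2 * (-1) ^ D b * t)" by simp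
      then show "z (Ov b) = 2 * (-1) ^ D b * t" using r row_Inner[OF b(1)] zi
        by (simp add: algebra_simps)
    qed
  qed
  have ovtop: "(\<Sum>a\<in>tops. z (Ov a)) = real (card tops) * (2 * t)"
  proof -
    have "(\<Sum>a\<in>tops. z (Ov a)) = (\<Sum>a\<in>tops. 2 * t)"
    proof (rule sum.cong)
      fix a assume "a \<in> tops"
      then have "is_top Ovs encl a" by (simp add: in_tops)
      then show "z (Ov a) = 2 * t" using ov depth_top[of a] unfolding is_top_def by auto
    qed simp
    then show ?thesis by simp
  qed
  have e0: "rowsum z Outer = 0" "rowsum z U1 = 0" "rowsum z U2 = 0" "rowsum z U3 = 0"
    using h U_in by auto
  have "2 * t + z U1 = 0" using e0(1) row_Outer ovtop t_def by (simp add: algebra_simps)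
  then have t0: "t = 0" "z U1 = 0" "z U2 = 0" "z U3 = 0"
    using e0(2-4) row_U1 row_U2 row_U3 t_def by simp_all
  show ?thesis
  proof
    fix v assume v: "v \<in> gverts Ovs"
    show "z v = 0"
    proof (cases v)
      case (Inner a)
      then show ?thesis using inner[of "D a"] v t0 unfolding gverts_def by auto
    next
      case (Ov a)
      then show ?thesis using ov[of "card (desc a)"] v t0 unfolding gverts_def by auto
    qed (use t0 t_def in auto)
  qed
qed

lemma rowsum_diff: "rowsum (\<lambda>v. x v - y v) w = rowsum x w - rowsum y w"
  unfolding rowsum_def by (simp add: right_diff_distrib sum_subtractf)

lemma solves_rowsum: "solves Ovs encl ccw jsgn oddtype x \<longleftrightarrow>
   (\<forall>v. v \<notin> gverts Ovs \<longrightarrow> x v = 0) \<and> (\<forall>v\<in>gverts Ovs. rowsum x v = svec Ovs encl ccw jsgn oddtype v)"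
  unfolding solves_def rowsum_def by simp

lemma solves_unique: assumes "solves Ovs encl ccw jsgn oddtype x" "solves Ovs encl ccw jsgn oddtype y"
  shows "x = y"
proof -
  have "\<forall>v\<in>gverts Ovs. rowsum (\<lambda>v. x v - y v) v = 0" using assms unfolding solves_rowsum
    by (simp add: rowsum_diff)
  then have "\<forall>v\<in>gverts Ovs. x v - y v = 0" by (rule hom_zero)
  then show ?thesis using assms unfolding solves_rowsum by (metis eq_iff_diff_eq_0 ext)
qed

end



lemma part_sum:
  assumes "finite I" "finite X" "\<And>d. d \<in> X \<Longrightarrow> \<exists>!a. a \<in> I \<and> R a d"
  shows "(\<Sum>a\<in>I. \<Sum>d\<in>{d\<in>X. R a d}. f d) = (\<Sum>d\<in>X. (f d :: real))"
proof -
  have "(\<Sum>a\<in>I. \<Sum>d\<in>{d\<in>X. R a d}. f d) = (\<Sum>a\<in>I. \<Sum>d\<in>X. if R a d then f d else 0)"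
    using assms(2) by (simp add: sum.inter_filter)
  also have "\<dots> = (\<Sum>d\<in>X. \<Sum>a\<in>I. if R a d then f d else 0)" by (rule sum.swap)
  also have "\<dots> = (\<Sum>d\<in>X. f d)"
  proof (rule sum.cong)
    fix d assume d: "d \<in> X"
    then obtain a0 where a0: "a0 \<in> I" "R a0 d" "\<And>a. a \<in> I \<Longrightarrow> R a d \<Longrightarrow> a = a0" using assms(3)[OF d] unfolding Ex1_def by blast
    have "(\<Sum>a\<in>I. if R a d then f d else 0) = (\<Sum>a\<in>I. if a = a0 then f d else 0)"
    proof (rule sum.cong)
      fix a assume aI: "a \<in> I"
      show "(if R a d then f d else 0) = (if a = a0 then f d else 0)"
      proof (cases "R a d")
        case True
        then have "a = a0" using a0(3) aI by blast
        then show ?thesis using True by simp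
      next
        case False
        then have "a \<noteq> a0" using a0(2) by blast
        then show ?thesis using False by simp
      qed
    qed simp
    also have "\<dots> = f d" using a0(1) assms(1) by simp
    finally show "(\<Sum>a\<in>I. if R a d then f d else 0) = f d" .
  qed simp
  finally show ?thesis .
qed

lemma sum_lin: "(\<Sum>a\<in>S. c + k * f a) = c * real (card S) + k * (\<Sum>a\<in>S. f a)"
  by (simp add: sum.distrib sum_distrib_left)

locale nfs = nf +
  fixes ccw :: "'a \<Rightarrow> bool" and jsgn :: int and oddtype :: bool
begin

definition ev where "ev a = real_of_int (eps ccw jsgn a)"
definition sg where "sg a = (-1::real) ^ D a"
definition Aa where "Aa a = (\<Sum>d\<in>{d\<in>Ovs. encl a d}. ev d)"
definition Bb where "Bb b = (\<Sum>d\<in>desc b. ev d)"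
definition EE where "EE = (\<Sum>a\<in>Ovs. ev a)"
definition sig where "sig = (if oddtype then 1 else (0::real))"
definition r0 where "r0 = - sig / 2"
definition x0 where "x0 v = (case v of Outer \<Rightarrow> r0
   | Inner a \<Rightarrow> if a \<in> Ovs then - sg a * (ev a + Aa a + r0) else 0
   | Ov a \<Rightarrow> if a \<in> Ovs then 2 * sg a * (ev a + Aa a + r0) + 2 * sg a * Bb a else 0
   | U1 \<Rightarrow> sig - 2 * EE | U2 \<Rightarrow> EE | U3 \<Rightarrow> EE - sig / 2)"

abbreviation sv where "sv \<equiv> svec Ovs encl ccw jsgn oddtype"

lemma sv_Ov: "a \<in> Ovs \<Longrightarrow> sv (Ov a) = - sg a * ev a"
  by (simp add: svec_def sg_def ev_def)
lemma sv_simps: "sv Outer = 0" "sv (Inner b) = 0" "sv U1 = 0" "sv U2 = sig" "sv U3 = 0"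
  by (simp_all add: svec_def sig_def)

lemma sg_top: "is_top Ovs encl a \<Longrightarrow> sg a = 1" by (simp add: sg_def depth_top)
lemma sg_par: "is_parent Ovs encl a p \<Longrightarrow> sg a = - sg p" by (simp add: sg_def depth_parent)
lemma sg_sq: "sg a * sg a = 1" by (simp add: sg_def flip: power_add)
lemma Aa_top: "is_top Ovs encl a \<Longrightarrow> Aa a = 0" by (simp add: Aa_def anc_top)
lemma Aa_par: "is_parent Ovs encl a p \<Longrightarrow> Aa a = ev p + Aa p"
  unfolding Aa_def using anc_parent[of a p] fin by simp

lemma chsum: assumes "b \<in> Ovs" shows "(\<Sum>a\<in>ch b. ev a + Bb a) = Bb b"
proof -
  have "(\<Sum>a\<in>ch b. ev a + Bb a) = (\<Sum>a\<in>ch b. \<Sum>d\<in>{d\<in>desc b. d = a \<or> encl d a}. ev d)"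
  proof (rule sum.cong)
    fix a assume "a \<in> ch b"
    then have p: "is_parent Ovs encl a b" by (simp add: in_ch)
    have "{d\<in>desc b. d = a \<or> encl d a} = insert a (desc a)" "a \<notin> desc a"
      using p tr irr encl_in unfolding desc_def is_parent_def by blast+
    moreover have "finite (desc a)" using fin unfolding desc_def by simp
    ultimately show "ev a + Bb a = (\<Sum>d\<in>{d\<in>desc b. d = a \<or> encl d a}. ev d)" by (simp add: Bb_def)
  qed simp
  also have "\<dots> = (\<Sum>d\<in>desc b. ev d)"
  proof (rule part_sum)
    show "finite (ch b)" by (rule fin_ch)
    show "finite (desc b)" using fin unfolding desc_def by simp
    fix d assume "d \<in> desc b"
    then have "encl d b" unfolding desc_def by simp
    then show "\<exists>!a. a \<in> ch b \<and> (d = a \<or> encl d a)" using desc_ex desc_uniq unfolding in_ch by metis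
  qed
  finally show ?thesis by (simp add: Bb_def)
qed

lemma topsum: "(\<Sum>a\<in>tops. ev a + Bb a) = EE"
proof -
  have "(\<Sum>a\<in>tops. ev a + Bb a) = (\<Sum>a\<in>tops. \<Sum>d\<in>{d\<in>Ovs. d = a \<or> encl d a}. ev d)"
  proof (rule sum.cong)
    fix a assume "a \<in> tops"
    then have p: "is_top Ovs encl a" by (simp add: in_tops)
    have "{d\<in>Ovs. d = a \<or> encl d a} = insert a (desc a)" "a \<notin> desc a"
      using p irr encl_in unfolding desc_def is_top_def by blast+
    moreover have "finite (desc a)" using fin unfolding desc_def by simp
    ultimately show "ev a + Bb a = (\<Sum>d\<in>{d\<in>Ovs. d = a \<or> encl d a}. ev d)" by (simp add: Bb_def)
  qed simp
  also have "\<dots> = (\<Sum>d\<in>Ovs. ev d)"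
  proof (rule part_sum)
    show "finite tops" by (rule fin_tops)
    show "finite Ovs" by (rule fin)
    fix d assume "d \<in> Ovs"
    then show "\<exists>!a. a \<in> tops \<and> (d = a \<or> encl d a)" using top_ex top_uniq unfolding in_tops by metis
  qed
  finally show ?thesis by (simp add: EE_def)
qed

lemma x0_solves: "solves Ovs encl ccw jsgn oddtype x0"
  unfolding solves_rowsum
proof (intro conjI ballI allI impI)
  fix v assume "v \<notin> gverts Ovs"
  then show "x0 v = 0" unfolding gverts_def x0_def by (cases v) auto
next
  fix v assume v: "v \<in> gverts Ovs"
  show "rowsum x0 v = sv v"
  proof (cases v)
    case Outer
    have "(\<Sum>a\<in>tops. x0 (Ov a)) = (\<Sum>a\<in>tops. 2 * r0 + 2 * (ev a + Bb a))"
    proof (rule sum.cong)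
      fix a assume "a \<in> tops"
      then have t: "is_top Ovs encl a" by (simp add: in_tops)
      then have "a \<in> Ovs" unfolding is_top_def by simp
      then show "x0 (Ov a) = 2 * r0 + 2 * (ev a + Bb a)"
        using sg_top[OF t] Aa_top[OF t] by (simp add: x0_def algebra_simps)
    qed simp
    also have "\<dots> = 2 * r0 * real (card tops) + 2 * (\<Sum>a\<in>tops. ev a + Bb a)"
      by (simp add: sum.distrib sum_distrib_left)
    also have "\<dots> = 2 * r0 * real (card tops) + 2 * EE" by (simp only: topsum)
    finally have S: "(\<Sum>a\<in>tops. x0 (Ov a)) = 2 * r0 * real (card tops) + 2 * EE" .
    have xo: "x0 Outer = r0" "x0 U1 = sig - 2 * EE" by (simp_all add: x0_def)
    show ?thesis unfolding Outer row_Outer S xo sv_simps by (simp add: r0_def algebra_simps)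
  next
    case (Inner b)
    then have b: "b \<in> Ovs" using v unfolding gverts_def by auto
    have "(\<Sum>a\<in>ch b. x0 (Ov a)) = (\<Sum>a\<in>ch b. -2 * sg b * (ev b + Aa b + r0) + (-2 * sg b) * (ev a + Bb a))"
    proof (rule sum.cong)
      fix a assume "a \<in> ch b"
      then have p: "is_parent Ovs encl a b" by (simp add: in_ch)
      then have "a \<in> Ovs" unfolding is_parent_def by simp
      then show "x0 (Ov a) = -2 * sg b * (ev b + Aa b + r0) + (-2 * sg b) * (ev a + Bb a)"
        using sg_par[OF p] Aa_par[OF p] by (simp add: x0_def algebra_simps)
    qed simp
    also have "\<dots> = -2 * sg b * (ev b + Aa b + r0) * real (card (ch b)) + (-2 * sg b) * (\<Sum>a\<in>ch b. ev a + Bb a)"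
      using sum_lin[of "-2 * sg b * (ev b + Aa b + r0)" "-2 * sg b" "\<lambda>a. ev a + Bb a" "ch b"] by simp
    also have "\<dots> = -2 * sg b * (ev b + Aa b + r0) * real (card (ch b)) + (-2 * sg b) * Bb b"
      by (simp only: chsum[OF b])
    finally have S: "(\<Sum>a\<in>ch b. x0 (Ov a)) = -2 * sg b * (ev b + Aa b + r0) * real (card (ch b)) + (-2 * sg b) * Bb b" .
    have xo: "x0 (Inner b) = - sg b * (ev b + Aa b + r0)" "x0 (Ov b) = 2 * sg b * (ev b + Aa b + r0) + 2 * sg b * Bb b"
      using b by (simp_all add: x0_def)
    show ?thesis unfolding Inner row_Inner[OF b] S xo sv_simps by (simp add: algebra_simps)
  next
    case (Ov a)
    then have a: "a \<in> Ovs" using v unfolding gverts_def by auto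
    show ?thesis
    proof (cases "is_top Ovs encl a")
      case True
      then show ?thesis using Ov row_Ov_top[OF True] sv_Ov[OF a] a sg_top[OF True] Aa_top[OF True]
        by (simp add: x0_def)
    next
      case False
      then obtain p where p: "is_parent Ovs encl a p" using top_or_parent a by blast
      have "p \<in> Ovs" using p unfolding is_parent_def by simp
      then show ?thesis using Ov row_Ov_par[OF p] sv_Ov[OF a] a sg_par[OF p] Aa_par[OF p]
        by (simp add: x0_def algebra_simps)
    qed
  qed (auto simp add: row_U1 row_U2 row_U3 sv_simps x0_def r0_def)
qed

end



context nfs begin

lemma ev_pm: assumes "jsgn = 1 \<or> jsgn = -1" shows "eps ccw jsgn a = 1 \<or> eps ccw jsgn a = -1"
  using assms unfolding eps_def by auto

lemma ev_mult: assumes "jsgn = 1 \<or> jsgn = -1"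
  shows "ev a * ev d = (if ccw a = ccw d then 1 else -1)"
  using assms unfolding ev_def eps_def by auto

lemma sum_pm: "finite S \<Longrightarrow> (\<Sum>p\<in>S. if P p then 1 else -1) = real (card {p\<in>S. P p}) - real (card {p\<in>S. \<not> P p})"
proof -
  assume f: "finite S"
  have "(\<Sum>p\<in>S. if P p then 1 else (-1::real)) = (\<Sum>p\<in>S \<inter> {p. P p}. 1) + (\<Sum>p\<in>S \<inter> - {p. P p}. -1)"
    using f by (rule sum.If_cases)
  moreover have "S \<inter> {p. P p} = {p\<in>S. P p}" "S \<inter> - {p. P p} = {p\<in>S. \<not> P p}" by auto
  ultimately show ?thesis by simp
qed

definition PP where "PP = (\<Sum>a\<in>Ovs. ev a * Aa a)"

lemma PP_B: "(\<Sum>b\<in>Ovs. ev b * Bb b) = PP"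
proof -
  have "(\<Sum>b\<in>Ovs. ev b * Bb b) = (\<Sum>b\<in>Ovs. \<Sum>d\<in>Ovs. if encl d b then ev d * ev b else 0)"
    unfolding Bb_def desc_def using fin by (auto simp add: sum.inter_filter sum_distrib_left mult.commute intro!: sum.cong)
  also have "\<dots> = (\<Sum>d\<in>Ovs. \<Sum>b\<in>Ovs. if encl d b then ev d * ev b else 0)" by (rule sum.swap)
  also have "\<dots> = PP"
    unfolding PP_def Aa_def using fin by (auto simp add: sum.inter_filter sum_distrib_left intro!: sum.cong)
  finally show ?thesis .
qed

lemma PP_val: assumes "jsgn = 1 \<or> jsgn = -1"
  shows "PP = real (Pi_minus Ovs encl ccw) - real (Pi_plus Ovs encl ccw)"
proof -
  define S where "S = Sigma Ovs (\<lambda>a. {d\<in>Ovs. encl a d})"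
  have fS: "finite S" unfolding S_def using fin by simp
  have "PP = (\<Sum>a\<in>Ovs. \<Sum>d\<in>{d\<in>Ovs. encl a d}. ev a * ev d)"
    unfolding PP_def Aa_def by (simp add: sum_distrib_left)
  also have "\<dots> = (\<Sum>p\<in>S. ev (fst p) * ev (snd p))"
    unfolding S_def using fin by (subst sum.Sigma) (auto simp: case_prod_beta)
  also have "\<dots> = (\<Sum>p\<in>S. if ccw (fst p) = ccw (snd p) then 1 else -1)"
    using ev_mult[OF assms] by simp
  also have "\<dots> = real (card {p\<in>S. ccw (fst p) = ccw (snd p)}) - real (card {p\<in>S. ccw (fst p) \<noteq> ccw (snd p)})"
    using fS by (rule sum_pm)
  also have "{p\<in>S. ccw (fst p) = ccw (snd p)} = {(a, b). a \<in> Ovs \<and> b \<in> Ovs \<and> encl a b \<and> ccw a = ccw b}"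
    unfolding S_def by auto
  also have "{p\<in>S. ccw (fst p) \<noteq> ccw (snd p)} = {(a, b). a \<in> Ovs \<and> b \<in> Ovs \<and> encl a b \<and> ccw a \<noteq> ccw b}"
    unfolding S_def by auto
  finally show ?thesis unfolding Pi_minus_def Pi_plus_def .
qed

lemma EE_val: assumes "jsgn = 1 \<or> jsgn = -1"
  shows "EE = real (Lambda_plus Ovs ccw jsgn) - real (Lambda_minus Ovs ccw jsgn)"
proof -
  have "EE = (\<Sum>a\<in>Ovs. if eps ccw jsgn a = 1 then 1 else -1)"
    unfolding EE_def ev_def
  proof (intro sum.cong refl)
    fix a show "real_of_int (eps ccw jsgn a) = (if eps ccw jsgn a = 1 then 1 else -1)"
      using ev_pm[OF assms, of a] by auto
  qed
  also have "\<dots> = real (card {a\<in>Ovs. eps ccw jsgn a = 1}) - real (card {a\<in>Ovs. eps ccw jsgn a \<noteq> 1})"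
    using fin by (rule sum_pm)
  also have "{a\<in>Ovs. eps ccw jsgn a \<noteq> 1} = {a\<in>Ovs. eps ccw jsgn a = -1}" using ev_pm[OF assms] by force
  finally show ?thesis unfolding Lambda_plus_def Lambda_minus_def .
qed

lemma Delta_val: assumes "jsgn = 1 \<or> jsgn = -1"
  shows "Delta Ovs encl ccw jsgn oddtype = 4 * sig * EE - 4 * real (card Ovs) - 8 * PP"
proof -
  have the: "(THE x. solves Ovs encl ccw jsgn oddtype x) = x0"
    using x0_solves solves_unique by blast
  have per: "sv (Ov a) * x0 (Ov a) = -2 * (1 + ev a * Aa a + r0 * ev a + ev a * Bb a)" if a: "a \<in> Ovs" for a
  proof -
    have "sv (Ov a) * x0 (Ov a) = -2 * (sg a * sg a) * (ev a * ev a + ev a * Aa a + r0 * ev a + ev a * Bb a)"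
      using a by (simp add: sv_Ov x0_def algebra_simps)
    also have "ev a * ev a = 1" using ev_mult[OF assms, of a a] by simp
    finally show ?thesis by (simp add: sg_sq)
  qed
  have "(\<Sum>v\<in>gverts Ovs. sv v * x0 v) = sig * EE + (\<Sum>a\<in>Ovs. sv (Ov a) * x0 (Ov a))"
    unfolding sum_gverts by (simp add: sv_simps x0_def)
  also have "(\<Sum>a\<in>Ovs. sv (Ov a) * x0 (Ov a)) = (\<Sum>a\<in>Ovs. -2 * (1 + ev a * Aa a + r0 * ev a + ev a * Bb a))"
    using per by (rule sum.cong[OF refl])
  also have "\<dots> = -2 * (real (card Ovs) + PP + r0 * EE + PP)"
    unfolding sum_distrib_left[symmetric] sum.distrib by (simp add: PP_def PP_B EE_def)
  finally have "(\<Sum>v\<in>gverts Ovs. sv v * x0 v) = sig * EE - 2 * (real (card Ovs) + PP + r0 * EE + PP)" by simp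
  then show ?thesis unfolding Delta_def the by (simp add: r0_def algebra_simps)
qed

end


theorem proposition1p5:
  fixes Ovs :: "'a set" and encl :: "'a \<Rightarrow> 'a \<Rightarrow> bool" and ccw :: "'a \<Rightarrow> bool"
    and jsgn :: int and oddtype :: bool
  assumes "nest_forest Ovs encl"
    and "jsgn = 1 \<or> jsgn = -1"
  shows "(\<exists>!x. solves Ovs encl ccw jsgn oddtype x)
    \<and> (oddtype \<longrightarrow> Delta Ovs encl ccw jsgn oddtype =
          -4 * (real (card Ovs)
                + 2 * (real (Pi_minus Ovs encl ccw) - real (Pi_plus Ovs encl ccw))
                + (real (Lambda_minus Ovs ccw jsgn) - real (Lambda_plus Ovs ccw jsgn))))
    \<and> (\<not> oddtype \<longrightarrow> Delta Ovs encl ccw jsgn oddtype =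
          -4 * (real (card Ovs)
                + 2 * (real (Pi_minus Ovs encl ccw) - real (Pi_plus Ovs encl ccw))))"
proof -
  interpret nfs Ovs encl ccw jsgn oddtype by unfold_locales (rule assms(1))
  have ex: "\<exists>!x. solves Ovs encl ccw jsgn oddtype x"
    using x0_solves solves_unique by blast
  have D: "Delta Ovs encl ccw jsgn oddtype = 4 * sig * EE - 4 * real (card Ovs) - 8 * PP"
    by (rule Delta_val[OF assms(2)])
  have P: "PP = real (Pi_minus Ovs encl ccw) - real (Pi_plus Ovs encl ccw)" by (rule PP_val[OF assms(2)])
  have E: "EE = real (Lambda_plus Ovs ccw jsgn) - real (Lambda_minus Ovs ccw jsgn)" by (rule EE_val[OF assms(2)])
  show ?thesis
  proof (intro conjI impI)
    show "\<exists>!x. solves Ovs encl ccw jsgn oddtype x" by (rule ex)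
  next
    assume o: "oddtype"
    have "sig = 1" unfolding sig_def using o by simp
    then have "Delta Ovs encl ccw jsgn oddtype = 4 * EE - 4 * real (card Ovs) - 8 * PP" using D by simp
    then show "Delta Ovs encl ccw jsgn oddtype =
          -4 * (real (card Ovs)
                + 2 * (real (Pi_minus Ovs encl ccw) - real (Pi_plus Ovs encl ccw))
                + (real (Lambda_minus Ovs ccw jsgn) - real (Lambda_plus Ovs ccw jsgn)))"
      using P E by (simp add: algebra_simps)
  next
    assume o: "\<not> oddtype"
    have "sig = 0" unfolding sig_def using o by simp
    then have "Delta Ovs encl ccw jsgn oddtype = - 4 * real (card Ovs) - 8 * PP" using D by simp
    then show "Delta Ovs encl ccw jsgn oddtype =
          -4 * (real (card Ovs)
                + 2 * (real (Pi_minus Ovs encl ccw) - real (Pi_plus Ovs encl ccw)))"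
      using P by (simp add: algebra_simps)
  qed
qed

end
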